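(* Let $L\in\mathbb{N}$, $\alpha,T,\hat r>0$, $\varphi_i\in\mathbb{R}$, and let $R_1,\dots,R_L$ be i.i.d. random variables with PDF $$f(r)=\alpha\exp\Big(-\frac{r^\alpha}{\hat r^\alpha}\Big)\sum_{i=0}^\infty\frac{\varphi_i\,r^{\alpha(i+T)-1}}{\hat r^{\alpha(i+T)}\Gamma(i+T)},\qquad r\ge0.$$ Let $R=\sum_{\ell=1}^LR_\ell$, $\lambda_i=\frac{\Gamma(\alpha(i+T))}{\hat r^{\alpha i}}\sum_{j=0}^i\frac{(-1)^{i-j}\varphi_j}{(i-j)!\,\Gamma(j+T)}$ for $i\ge0$, $\delta_0=\lambda_0^L$ and $\delta_i=\frac{1}{i\lambda_0}\sum_{h=1}^i\delta_{i-h}\lambda_h(hL+h-i)$ for $i\ge1$. Then for $r\ge0$ $$f_R(r)=\frac{\alpha^L}{\hat r^{\alpha TL}}\sum_{i=0}^\infty\frac{\delta_i\,r^{-1+\alpha i+\alpha LT}}{\Gamma(i\alpha+\alpha LT)},\qquad F_R(r)=\frac{\alpha^L}{\hat r^{\alpha TL}}\sum_{i=0}^\infty\frac{\delta_i\,r^{\alpha i+\alpha LT}}{\Gamma(1+i\alpha+\alpha LT)}.$$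
   Context: $\Gamma$ is the gamma function. The given $f$ is assumed to be a valid (absolutely convergent) probability density. *)

theory Defs
  imports "HOL-Probability.Probability"
begin

definition pdf_f :: "real \<Rightarrow> real \<Rightarrow> real \<Rightarrow> (nat \<Rightarrow> real) \<Rightarrow> real \<Rightarrow> real" where
  "pdf_f \<alpha> T rh \<phi> r =
     \<alpha> * exp (- (r powr \<alpha>) / (rh powr \<alpha>)) *
     (\<Sum>i. \<phi> i * r powr (\<alpha> * (real i + T) - 1) / (rh powr (\<alpha> * (real i + T)) * Gamma (real i + T)))"

definition lam :: "real \<Rightarrow> real \<Rightarrow> real \<Rightarrow> (nat \<Rightarrow> real) \<Rightarrow> nat \<Rightarrow> real" where
  "lam \<alpha> T rh \<phi> i =
     Gamma (\<alpha> * (real i + T)) / rh powr (\<alpha> * real i) *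
     (\<Sum>j\<le>i. (-1) ^ (i - j) * \<phi> j / (fact (i - j) * Gamma (real j + T)))"

function delta :: "real \<Rightarrow> real \<Rightarrow> real \<Rightarrow> (nat \<Rightarrow> real) \<Rightarrow> nat \<Rightarrow> nat \<Rightarrow> real" where
  "delta \<alpha> T rh \<phi> L i =
     (if i = 0 then (lam \<alpha> T rh \<phi> 0) ^ L
      else (1 / (real i * lam \<alpha> T rh \<phi> 0)) *
        (\<Sum>h\<in>{1..i}. delta \<alpha> T rh \<phi> L (i - h) * lam \<alpha> T rh \<phi> h *
            (real (h * L + h) - real i)))"
  by pat_completeness auto
termination
  by (relation "Wellfounded.measure (\<lambda>(_, _, _, _, _, i). i)") auto

definition pdf_sum :: "real \<Rightarrow> real \<Rightarrow> real \<Rightarrow> (nat \<Rightarrow> real) \<Rightarrow> nat \<Rightarrow> real \<Rightarrow> real" where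
  "pdf_sum \<alpha> T rh \<phi> L r =
     \<alpha> ^ L / rh powr (\<alpha> * T * real L) *
     (\<Sum>i. delta \<alpha> T rh \<phi> L i * r powr (-1 + \<alpha> * real i + \<alpha> * real L * T)
            / Gamma (real i * \<alpha> + \<alpha> * real L * T))"

definition cdf_sum :: "real \<Rightarrow> real \<Rightarrow> real \<Rightarrow> (nat \<Rightarrow> real) \<Rightarrow> nat \<Rightarrow> real \<Rightarrow> real" where
  "cdf_sum \<alpha> T rh \<phi> L r =
     \<alpha> ^ L / rh powr (\<alpha> * T * real L) *
     (\<Sum>i. delta \<alpha> T rh \<phi> L i * r powr (\<alpha> * real i + \<alpha> * real L * T)
            / Gamma (1 + real i * \<alpha> + \<alpha> * real L * T))"

end

theory Submission
  imports Defs "HOL-Computational_Algebra.Formal_Power_Series"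
begin

lemma beta_scaled:
  fixes p q r :: real
  assumes p: "p > 0" and q: "q > 0" and r: "r > 0"
  shows "((\<lambda>s. (r - s) powr (p - 1) * s powr (q - 1)) has_integral (r powr (p + q - 1) * Beta q p)) {0..r}"
proof -
  have B: "((\<lambda>t. t powr (q - 1) * (1 - t) powr (p - 1)) has_integral Beta q p) {0..1}"
    using has_integral_Beta_real[OF q p] .
  have "((\<lambda>x. (\<lambda>t. t powr (q - 1) * (1 - t) powr (p - 1)) ((1/r) * x)) has_integral (1 / \<bar>1/r\<bar>) *\<^sub>R Beta q p) ((\<lambda>x. x / (1/r)) ` {0..1})"
    by (rule has_integral_stretch_real[OF B]) (use r in simp)
  moreover have "(\<lambda>x. x / (1/r)) ` {0..1} = {0..r}"
    using r by (auto simp: image_iff intro!: bexI[where x="_ / r"] simp: field_simps)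
  ultimately have I: "((\<lambda>s. (s/r) powr (q - 1) * (1 - s/r) powr (p - 1)) has_integral r * Beta q p) {0..r}"
    using r by simp
  have "((\<lambda>s. r powr (p + q - 2) * ((s/r) powr (q - 1) * (1 - s/r) powr (p - 1))) has_integral r powr (p + q - 2) * (r * Beta q p)) {0..r}"
    by (rule has_integral_mult_right[OF I])
  moreover have "r powr (p + q - 2) * ((s/r) powr (q - 1) * (1 - s/r) powr (p - 1)) = (r - s) powr (p - 1) * s powr (q - 1)"
    if "s \<in> {0..r}" for s
  proof -
    have "1 - s/r = (r - s) / r" using r by (simp add: field_simps)
    hence "(s/r) powr (q - 1) * (1 - s/r) powr (p - 1) = s powr (q-1) * (r-s) powr (p-1) / (r powr (q-1) * r powr (p-1))"
      using that r by (simp add: powr_divide)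
    also have "r powr (q-1) * r powr (p-1) = r powr (p + q - 2)" by (simp add: powr_add[symmetric] add.commute)
    finally show ?thesis using r by (simp add: field_simps)
  qed
  moreover have "r powr (p + q - 2) * (r * Beta q p) = r powr (p + q - 1) * Beta q p"
    using r by (simp add: powr_add[symmetric] powr_diff power2_eq_square)
  ultimately show ?thesis
    by (metis (no_types, lifting) has_integral_cong)
qed


definition Sr :: "real \<Rightarrow> (nat \<Rightarrow> real) \<Rightarrow> real \<Rightarrow> real \<Rightarrow> real" where
  "Sr \<alpha> c a r = (\<Sum>i. c i * r powr (\<alpha> * real i + a - 1) / Gamma (\<alpha> * real i + a))"

definition ACr :: "real \<Rightarrow> (nat \<Rightarrow> real) \<Rightarrow> real \<Rightarrow> bool" where
  "ACr \<alpha> c a \<longleftrightarrow> (\<forall>r>0. summable (\<lambda>i. \<bar>c i\<bar> * r powr (\<alpha> * real i) / Gamma (\<alpha> * real i + a)))"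

lemma Gamma_pos_aux: "\<alpha> \<ge> 0 \<Longrightarrow> a > 0 \<Longrightarrow> Gamma (\<alpha> * real i + a) > 0"
  by (intro Gamma_real_pos) (simp add: add_nonneg_pos)

lemma ACr_summable_abs:
  assumes "ACr \<alpha> c a" "r > 0" "\<alpha> \<ge> 0" "a > 0"
  shows "summable (\<lambda>i. \<bar>c i * r powr (\<alpha> * real i + a - 1) / Gamma (\<alpha> * real i + a)\<bar>)"
proof -
  have "summable (\<lambda>i. \<bar>c i\<bar> * r powr (\<alpha> * real i) / Gamma (\<alpha> * real i + a) * r powr (a - 1))"
    using assms unfolding ACr_def by (intro summable_mult2) auto
  moreover have "\<bar>c i * r powr (\<alpha> * real i + a - 1) / Gamma (\<alpha> * real i + a)\<bar> =
      \<bar>c i\<bar> * r powr (\<alpha> * real i) / Gamma (\<alpha> * real i + a) * r powr (a - 1)" for i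
    using assms Gamma_pos_aux[of \<alpha> a i]
    by (simp add: abs_mult powr_add[symmetric] abs_divide add_diff_eq)
  ultimately show ?thesis by simp
qed

lemma ACr_summable:
  assumes "ACr \<alpha> c a" "r > 0" "\<alpha> \<ge> 0" "a > 0"
  shows "summable (\<lambda>i. c i * r powr (\<alpha> * real i + a - 1) / Gamma (\<alpha> * real i + a))"
  using summable_norm_cancel[of "\<lambda>i. c i * r powr (\<alpha> * real i + a - 1) / Gamma (\<alpha> * real i + a)"]
    ACr_summable_abs[OF assms] by (simp add: real_norm_def)

lemma Gamma_shift_bound:
  fixes x p a :: real
  assumes "a > 0" "x \<ge> a" "p > 0"
  shows "1 / Gamma (x + p) \<le> (Beta a p / Gamma p) * (1 / Gamma x)"
proof -
  have gx: "Gamma x > 0" "Gamma p > 0" "Gamma (x + p) > 0" using assms by (auto intro!: Gamma_real_pos)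
  have "Beta x p = Gamma x * Gamma p / Gamma (x + p)"
    by (simp add: Beta_altdef rGamma_inverse_Gamma field_simps)
  moreover have "Beta x p \<le> Beta a p" using assms by (intro Beta_real_mono) auto
  ultimately have "Gamma x * Gamma p / Gamma (x + p) \<le> Beta a p" by simp
  thus ?thesis using gx by (simp add: field_simps)
qed

lemma ACr_shift:
  assumes "ACr \<alpha> c a" "\<alpha> \<ge> 0" "a > 0" "p > 0"
  shows "ACr \<alpha> c (a + p)"
  unfolding ACr_def
proof (intro allI impI)
  fix r :: real assume r: "r > 0"
  define C where "C = Beta a p / Gamma p"
  have S: "summable (\<lambda>i. C * (\<bar>c i\<bar> * r powr (\<alpha> * real i) / Gamma (\<alpha> * real i + a)))"
    using assms r unfolding ACr_def by (intro summable_mult) auto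
  have le: "\<bar>c i\<bar> * r powr (\<alpha> * real i) / Gamma (\<alpha> * real i + (a + p)) \<le>
        C * (\<bar>c i\<bar> * r powr (\<alpha> * real i) / Gamma (\<alpha> * real i + a))" for i
  proof -
    have "1 / Gamma (\<alpha> * real i + a + p) \<le> C * (1 / Gamma (\<alpha> * real i + a))"
      unfolding C_def using assms by (intro Gamma_shift_bound) auto
    from mult_left_mono[OF this, of "\<bar>c i\<bar> * r powr (\<alpha> * real i)"]
    show ?thesis by (simp add: add.assoc mult_ac)
  qed
  have nn: "0 \<le> \<bar>c i\<bar> * r powr (\<alpha> * real i) / Gamma (\<alpha> * real i + (a + p))" for i
    using Gamma_pos_aux[of \<alpha> "a+p" i] assms by simp
  show "summable (\<lambda>i. \<bar>c i\<bar> * r powr (\<alpha> * real i) / Gamma (\<alpha> * real i + (a + p)))"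
  proof (rule summable_comparison_test'[OF S])
    fix n :: nat
    show "norm (\<bar>c n\<bar> * r powr (\<alpha> * real n) / Gamma (\<alpha> * real n + (a + p))) \<le> C * (\<bar>c n\<bar> * r powr (\<alpha> * real n) / Gamma (\<alpha> * real n + a))"
      using le[of n] nn[of n] by (simp only: real_norm_def abs_of_nonneg)
  qed
qed


lemma Sr_0: "Sr \<alpha> c a 0 = 0"
  by (simp add: Sr_def)

lemma conv1:
  assumes al: "\<alpha> > 0" and a: "a > 0" and p: "p > 0" and r: "r > 0" and AC: "ACr \<alpha> c a"
  shows "((\<lambda>s. (r - s) powr (p - 1) * Sr \<alpha> c a s) has_integral (Gamma p * Sr \<alpha> c (a + p) r)) {0..r}"
proof -
  define t where "t j s = c j * s powr (\<alpha> * real j + a - 1) / Gamma (\<alpha> * real j + a)" for j s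
  define K where "K = (\<Sum>j. \<bar>c j\<bar> * r powr (\<alpha> * real j) / Gamma (\<alpha> * real j + a))"
  define F where "F k s = (r - s) powr (p - 1) * (\<Sum>j<k. t j s)" for k s
  define h where "h s = K * ((r - s) powr (p - 1) * s powr (a - 1))" for s
  define v where "v j = Gamma p * (c j * r powr (\<alpha> * real j + (a + p) - 1) / Gamma (\<alpha> * real j + (a + p)))" for j
  have sumK: "summable (\<lambda>j. \<bar>c j\<bar> * r powr (\<alpha> * real j) / Gamma (\<alpha> * real j + a))"
    using AC r by (auto simp: ACr_def)
  have Fint: "(F k has_integral (\<Sum>j<k. v j)) {0..r}" for k
  proof -
    have "((\<lambda>s. (r - s) powr (p - 1) * t j s) has_integral v j) {0..r}" for j
    proof -
      let ?q = "\<alpha> * real j + a"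
      have q: "?q > 0" using al a by (simp add: add_nonneg_pos)
      have G: "Gamma ?q > 0" "Gamma p > 0" "Gamma (?q + p) > 0" using q p by (auto intro!: Gamma_real_pos)
      from has_integral_mult_right[OF beta_scaled[OF p q r], of "c j / Gamma ?q"]
      have I: "((\<lambda>s. c j / Gamma ?q * ((r - s) powr (p - 1) * s powr (?q - 1))) has_integral
                c j / Gamma ?q * (r powr (p + ?q - 1) * Beta ?q p)) {0..r}" .
      have e1: "c j / Gamma ?q * (r powr (p + ?q - 1) * Beta ?q p) = v j"
      proof -
        have ex: "p + ?q - 1 = \<alpha> * real j + (a + p) - 1" "?q + p = \<alpha> * real j + (a + p)" by simp_all
        have G3: "Gamma (\<alpha> * real j + (a + p)) > 0" using G(3) by (simp add: add.assoc)
        show ?thesis unfolding v_def Beta_altdef rGamma_inverse_Gamma ex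
          using G(1,2) G3 by (simp add: field_simps)
      qed
      have e2: "(\<lambda>s. c j / Gamma ?q * ((r - s) powr (p - 1) * s powr (?q - 1))) = (\<lambda>s. (r - s) powr (p - 1) * t j s)"
        by (rule ext) (simp add: t_def)
      show ?thesis using I unfolding e1 e2 .
    qed
    then have "((\<lambda>s. \<Sum>j<k. (r - s) powr (p - 1) * t j s) has_integral (\<Sum>j<k. v j)) {0..r}"
      by (intro has_integral_sum) auto
    thus ?thesis unfolding F_def by (simp add: sum_distrib_left)
  qed
  have hint: "h integrable_on {0..r}"
    unfolding h_def using has_integral_mult_right[OF beta_scaled[OF p a r], of K]
    by (rule has_integral_integrable)
  have bound: "norm (F k s) \<le> h s" if "s \<in> {0..r}" for k s
  proof (cases "s = 0")
    case True then show ?thesis by (simp add: F_def h_def t_def)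
  next
    case False
    then have s: "s > 0" "s \<le> r" using that by auto
    have "\<bar>\<Sum>j<k. t j s\<bar> \<le> (\<Sum>j<k. \<bar>t j s\<bar>)" by (rule sum_abs)
    also have "\<dots> \<le> (\<Sum>j<k. \<bar>c j\<bar> * r powr (\<alpha> * real j) / Gamma (\<alpha> * real j + a) * s powr (a - 1))"
    proof (intro sum_mono)
      fix j
      have G: "Gamma (\<alpha> * real j + a) > 0" using Gamma_pos_aux[of \<alpha> a j] al a by simp
      have "s powr (\<alpha> * real j) \<le> r powr (\<alpha> * real j)"
        using s al by (intro powr_mono2) auto
      hence "\<bar>c j\<bar> * s powr (\<alpha> * real j) * s powr (a - 1) / Gamma (\<alpha> * real j + a) \<le>
             \<bar>c j\<bar> * r powr (\<alpha> * real j) * s powr (a - 1) / Gamma (\<alpha> * real j + a)"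
        using G by (intro divide_right_mono mult_right_mono mult_left_mono) auto
      moreover have "\<bar>t j s\<bar> = \<bar>c j\<bar> * s powr (\<alpha> * real j) * s powr (a - 1) / Gamma (\<alpha> * real j + a)"
        using G s by (simp add: t_def abs_mult powr_add[symmetric] add_diff_eq)
      ultimately show "\<bar>t j s\<bar> \<le> \<bar>c j\<bar> * r powr (\<alpha> * real j) / Gamma (\<alpha> * real j + a) * s powr (a - 1)"
        by simp
    qed
    also have "\<dots> = (\<Sum>j<k. \<bar>c j\<bar> * r powr (\<alpha> * real j) / Gamma (\<alpha> * real j + a)) * s powr (a - 1)"
      by (simp add: sum_distrib_right)
    also have "\<dots> \<le> K * s powr (a - 1)"
      unfolding K_def
    proof (intro mult_right_mono sum_le_suminf[OF sumK])
      fix j show "0 \<le> \<bar>c j\<bar> * r powr (\<alpha> * real j) / Gamma (\<alpha> * real j + a)"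
        using Gamma_pos_aux[of \<alpha> a j] al a by simp
    qed auto
    finally have "\<bar>\<Sum>j<k. t j s\<bar> \<le> K * s powr (a - 1)" .
    hence "(r - s) powr (p - 1) * \<bar>\<Sum>j<k. t j s\<bar> \<le> (r - s) powr (p - 1) * (K * s powr (a - 1))"
      by (intro mult_left_mono) auto
    thus ?thesis by (simp add: F_def h_def abs_mult mult_ac)
  qed
  have conv: "(\<lambda>k. F k s) \<longlonglongrightarrow> (r - s) powr (p - 1) * Sr \<alpha> c a s" if "s \<in> {0..r}" for s
  proof (cases "s = 0")
    case True then show ?thesis by (simp add: F_def t_def Sr_0)
  next
    case False
    then have s: "s > 0" using that by auto
    have "summable (\<lambda>j. t j s)" unfolding t_def using ACr_summable[OF AC s] al a by simp
    hence "(\<lambda>k. \<Sum>j<k. t j s) \<longlonglongrightarrow> Sr \<alpha> c a s"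
      unfolding Sr_def t_def[symmetric] by (rule summable_LIMSEQ)
    thus ?thesis unfolding F_def by (intro tendsto_mult_left)
  qed
  note DC = dominated_convergence[OF has_integral_integrable[OF Fint] hint bound conv]
  have eqI: "(\<lambda>k. integral {0..r} (F k)) = (\<lambda>k. \<Sum>j<k. v j)"
    by (rule ext, rule integral_unique[OF Fint])
  have lim1: "(\<lambda>k. \<Sum>j<k. v j) \<longlonglongrightarrow> integral {0..r} (\<lambda>s. (r - s) powr (p - 1) * Sr \<alpha> c a s)"
    using DC(2) unfolding eqI .
  have "summable (\<lambda>j. c j * r powr (\<alpha> * real j + (a + p) - 1) / Gamma (\<alpha> * real j + (a + p)))"
    using ACr_summable[OF ACr_shift[OF AC _ a p] r] al a p by simp
  hence "(\<lambda>k. \<Sum>j<k. c j * r powr (\<alpha> * real j + (a + p) - 1) / Gamma (\<alpha> * real j + (a + p))) \<longlonglongrightarrow> Sr \<alpha> c (a + p) r"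
    unfolding Sr_def by (rule summable_LIMSEQ)
  hence lim2: "(\<lambda>k. \<Sum>j<k. v j) \<longlonglongrightarrow> Gamma p * Sr \<alpha> c (a + p) r"
    unfolding v_def sum_distrib_left[symmetric] by (intro tendsto_mult_left)
  have eqV: "integral {0..r} (\<lambda>s. (r - s) powr (p - 1) * Sr \<alpha> c a s) = Gamma p * Sr \<alpha> c (a + p) r"
    using LIMSEQ_unique[OF lim1 lim2] .
  show ?thesis using integrable_integral[OF DC(1)] unfolding eqV .
qed


lemma nonneg_suminf_infsum:
  fixes f :: "nat \<Rightarrow> real"
  assumes "summable f" "\<And>n. f n \<ge> 0"
  shows "f summable_on UNIV" "infsum f UNIV = suminf f"
  using sums_nonneg_imp_has_sum[OF summable_sums[OF assms(1)] assms(2)]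
  by (auto simp: has_sum_iff)

lemma abs_suminf_infsum:
  fixes f :: "nat \<Rightarrow> real"
  assumes "summable (\<lambda>n. \<bar>f n\<bar>)"
  shows "f summable_on UNIV" "infsum f UNIV = suminf f"
proof -
  have "summable f" using assms summable_norm_cancel[of f] by (simp add: real_norm_def)
  then have "(f has_sum suminf f) UNIV"
    using norm_summable_imp_has_sum[of f] assms by (simp add: summable_sums real_norm_def)
  thus "f summable_on UNIV" "infsum f UNIV = suminf f" by (auto simp: has_sum_iff)
qed

lemma double_series_core:
  fixes u :: "nat \<Rightarrow> nat \<Rightarrow> real"
  assumes A1: "\<And>i. summable (\<lambda>j. \<bar>u i j\<bar>)" and A2: "summable (\<lambda>i. \<Sum>j. \<bar>u i j\<bar>)"
  shows "(\<lambda>n. \<Sum>i\<le>n. u i (n - i)) sums (\<Sum>i. \<Sum>j. u i j)"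
proof -
  define U where "U = (\<lambda>(i, j). u i j)"
  have inner: "(\<lambda>j. u i j) summable_on UNIV" "infsum (\<lambda>j. u i j) UNIV = (\<Sum>j. u i j)" for i
    using abs_suminf_infsum[OF A1[of i]] by auto
  have innerabs: "(\<lambda>j. norm (u i j)) summable_on UNIV" "infsum (\<lambda>j. norm (u i j)) UNIV = (\<Sum>j. \<bar>u i j\<bar>)" for i
    using nonneg_suminf_infsum[OF A1[of i]] by (auto simp: real_norm_def)
  have outerabs: "(\<lambda>i. \<Sum>j. \<bar>u i j\<bar>) summable_on UNIV"
    by (rule nonneg_suminf_infsum(1)[OF A2 suminf_nonneg[OF A1]]) simp
  have "(\<lambda>x. norm (U x)) summable_on Sigma UNIV (\<lambda>_. UNIV)"
  proof (rule Infinite_Sum.abs_summable_on_Sigma_iff[THEN iffD2], intro conjI ballI)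
    show "(\<lambda>y. norm (U (x, y))) summable_on UNIV" for x using innerabs(1)[of x] by (simp add: U_def)
    have e1: "infsum (\<lambda>y. \<bar>U (x, y)\<bar>) UNIV = (\<Sum>j. \<bar>u x j\<bar>)" for x
      using innerabs(2)[of x] by (simp add: U_def)
    have e2: "\<bar>\<Sum>j. \<bar>u i j\<bar>\<bar> = (\<Sum>j. \<bar>u i j\<bar>)" for i
      by (rule abs_of_nonneg[OF suminf_nonneg[OF A1]]) simp
    show "(\<lambda>x. norm (infsum (\<lambda>y. norm (U (x, y))) UNIV)) summable_on UNIV"
      unfolding real_norm_def e1 e2 by (rule outerabs)
  qed
  hence Usum: "U summable_on UNIV \<times> UNIV" by (rule abs_summable_summable)
  have "(\<Sum>i. \<Sum>j. u i j) = infsum (\<lambda>i. \<Sum>j. u i j) UNIV"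
  proof -
    have "summable (\<lambda>i. \<bar>\<Sum>j. u i j\<bar>)"
    proof (rule summable_comparison_test'[OF A2])
      fix n
      have "\<bar>\<Sum>j. u n j\<bar> \<le> (\<Sum>j. \<bar>u n j\<bar>)"
        using summable_rabs[OF A1[of n]] .
      thus "norm \<bar>\<Sum>j. u n j\<bar> \<le> (\<Sum>j. \<bar>u n j\<bar>)" by simp
    qed
    from abs_suminf_infsum(2)[OF this] show ?thesis by (rule sym)
  qed
  also have "\<dots> = infsum (\<lambda>i. infsum (\<lambda>j. u i j) UNIV) UNIV" by (intro infsum_cong) (simp add: inner(2))
  also have "\<dots> = infsum U (UNIV \<times> UNIV)"
    unfolding U_def by (rule infsum_Sigma'_banach[OF Usum[unfolded U_def]])
  finally have L: "(\<Sum>i. \<Sum>j. u i j) = infsum U (UNIV \<times> UNIV)" .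
  define g where "g = (\<lambda>(n::nat, i::nat). (i, n - i))"
  have bij: "bij_betw g (Sigma UNIV (\<lambda>n. {..n})) (UNIV \<times> UNIV)"
  proof (rule bij_betw_byWitness[where f'="\<lambda>(i, j). (i + j, i)"])
    show "\<forall>a\<in>Sigma UNIV (\<lambda>n. {..n}). (\<lambda>(i, j). (i + j, i)) (g a) = a"
      by (clarsimp simp: g_def)
    show "\<forall>a'\<in>UNIV \<times> UNIV. g ((\<lambda>(i, j). (i + j, i)) a') = a'"
      by (clarsimp simp: g_def)
    show "g ` Sigma UNIV (\<lambda>n. {..n}) \<subseteq> UNIV \<times> UNIV" by simp
    show "(\<lambda>(i, j). (i + j, i)) ` (UNIV \<times> UNIV) \<subseteq> Sigma UNIV (\<lambda>n::nat. {..n})" by auto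
  qed
  have S2: "(\<lambda>x. U (g x)) summable_on Sigma UNIV (\<lambda>n. {..n})"
    by (subst summable_on_reindex_bij_betw[OF bij]) (rule Usum)
  have eqUg: "(\<lambda>x. U (g x)) = (\<lambda>(n, i). u i (n - i))"
    by (simp add: U_def g_def fun_eq_iff case_prod_beta)
  have S2': "(\<lambda>(n, i). u i (n - i)) summable_on Sigma UNIV (\<lambda>n. {..n})" using S2 unfolding eqUg .
  have "infsum U (UNIV \<times> UNIV) = infsum (\<lambda>x. U (g x)) (Sigma UNIV (\<lambda>n. {..n}))"
    by (rule infsum_reindex_bij_betw[OF bij, symmetric])
  also have "\<dots> = infsum (\<lambda>n. infsum (\<lambda>i. u i (n - i)) {..n}) UNIV"
    unfolding eqUg by (rule infsum_Sigma'_banach[of "\<lambda>n i. u i (n - i)", OF S2', symmetric])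
  also have "\<dots> = infsum (\<lambda>n. \<Sum>i\<le>n. u i (n - i)) UNIV" by simp
  finally have R: "infsum U (UNIV \<times> UNIV) = infsum (\<lambda>n. \<Sum>i\<le>n. u i (n - i)) UNIV" .
  have "(\<lambda>n. infsum (\<lambda>i. u i (n - i)) {..n}) summable_on UNIV"
    by (rule summable_on_Sigma_banach[of "\<lambda>n i. u i (n - i)", OF S2'])
  hence "(\<lambda>n. \<Sum>i\<le>n. u i (n - i)) summable_on UNIV" by simp
  hence "((\<lambda>n. \<Sum>i\<le>n. u i (n - i)) has_sum infsum (\<lambda>n. \<Sum>i\<le>n. u i (n - i)) UNIV) UNIV"
    by simp
  hence "(\<lambda>n. \<Sum>i\<le>n. u i (n - i)) sums infsum (\<lambda>n. \<Sum>i\<le>n. u i (n - i)) UNIV"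
    by (rule has_sum_imp_sums)
  thus ?thesis unfolding L R .
qed


lemma K_nonneg:
  assumes "ACr \<alpha> c a" "\<alpha> \<ge> 0" "a > 0" "r > 0"
  shows "0 \<le> (\<Sum>j. \<bar>c j\<bar> * r powr (\<alpha> * real j) / Gamma (\<alpha> * real j + a))"
proof (rule suminf_nonneg)
  show "summable (\<lambda>j. \<bar>c j\<bar> * r powr (\<alpha> * real j) / Gamma (\<alpha> * real j + a))"
    using assms by (auto simp: ACr_def)
  fix j show "0 \<le> \<bar>c j\<bar> * r powr (\<alpha> * real j) / Gamma (\<alpha> * real j + a)"
    using Gamma_pos_aux[of \<alpha> a j] assms by simp
qed

lemma partial_bound:
  assumes al: "\<alpha> > 0" and a: "a > 0" and AC: "ACr \<alpha> c a" and s: "0 < s" "s \<le> r"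
  shows "\<bar>\<Sum>j<k. c j * s powr (\<alpha> * real j + a - 1) / Gamma (\<alpha> * real j + a)\<bar>
           \<le> (\<Sum>j. \<bar>c j\<bar> * r powr (\<alpha> * real j) / Gamma (\<alpha> * real j + a)) * s powr (a - 1)"
proof -
  have r: "r > 0" using s by simp
  have sumK: "summable (\<lambda>j. \<bar>c j\<bar> * r powr (\<alpha> * real j) / Gamma (\<alpha> * real j + a))"
    using AC r by (auto simp: ACr_def)
  have "\<bar>\<Sum>j<k. c j * s powr (\<alpha> * real j + a - 1) / Gamma (\<alpha> * real j + a)\<bar>
        \<le> (\<Sum>j<k. \<bar>c j * s powr (\<alpha> * real j + a - 1) / Gamma (\<alpha> * real j + a)\<bar>)" by (rule sum_abs)
  also have "\<dots> \<le> (\<Sum>j<k. \<bar>c j\<bar> * r powr (\<alpha> * real j) / Gamma (\<alpha> * real j + a) * s powr (a - 1))"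
  proof (intro sum_mono)
    fix j
    have G: "Gamma (\<alpha> * real j + a) > 0" using Gamma_pos_aux[of \<alpha> a j] al a by simp
    have "s powr (\<alpha> * real j) \<le> r powr (\<alpha> * real j)"
      using s al by (intro powr_mono2) auto
    hence "\<bar>c j\<bar> * s powr (\<alpha> * real j) * s powr (a - 1) / Gamma (\<alpha> * real j + a) \<le>
           \<bar>c j\<bar> * r powr (\<alpha> * real j) * s powr (a - 1) / Gamma (\<alpha> * real j + a)"
      using G by (intro divide_right_mono mult_right_mono mult_left_mono) auto
    moreover have "\<bar>c j * s powr (\<alpha> * real j + a - 1) / Gamma (\<alpha> * real j + a)\<bar> = \<bar>c j\<bar> * s powr (\<alpha> * real j) * s powr (a - 1) / Gamma (\<alpha> * real j + a)"
      using G s by (simp add: abs_mult powr_add[symmetric] add_diff_eq)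
    ultimately show "\<bar>c j * s powr (\<alpha> * real j + a - 1) / Gamma (\<alpha> * real j + a)\<bar> \<le> \<bar>c j\<bar> * r powr (\<alpha> * real j) / Gamma (\<alpha> * real j + a) * s powr (a - 1)"
      by simp
  qed
  also have "\<dots> = (\<Sum>j<k. \<bar>c j\<bar> * r powr (\<alpha> * real j) / Gamma (\<alpha> * real j + a)) * s powr (a - 1)"
    by (simp add: sum_distrib_right)
  also have "\<dots> \<le> (\<Sum>j. \<bar>c j\<bar> * r powr (\<alpha> * real j) / Gamma (\<alpha> * real j + a)) * s powr (a - 1)"
  proof (intro mult_right_mono sum_le_suminf[OF sumK])
    fix j show "0 \<le> \<bar>c j\<bar> * r powr (\<alpha> * real j) / Gamma (\<alpha> * real j + a)"
      using Gamma_pos_aux[of \<alpha> a j] al a by simp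
  qed auto
  finally show ?thesis .
qed

lemma Sr_LIMSEQ:
  assumes al: "\<alpha> > 0" and a: "a > 0" and AC: "ACr \<alpha> c a" and s: "s \<ge> 0"
  shows "(\<lambda>k. \<Sum>j<k. c j * s powr (\<alpha> * real j + a - 1) / Gamma (\<alpha> * real j + a)) \<longlonglongrightarrow> Sr \<alpha> c a s"
proof (cases "s = 0")
  case True then show ?thesis by (simp add: Sr_0)
next
  case False
  hence "s > 0" using s by simp
  from ACr_summable[OF AC this] al a show ?thesis unfolding Sr_def
    by (intro summable_LIMSEQ) simp
qed

lemma Sr_bound:
  assumes al: "\<alpha> > 0" and a: "a > 0" and AC: "ACr \<alpha> c a" and s: "0 < s" "s \<le> r"
  shows "\<bar>Sr \<alpha> c a s\<bar> \<le> (\<Sum>j. \<bar>c j\<bar> * r powr (\<alpha> * real j) / Gamma (\<alpha> * real j + a)) * s powr (a - 1)"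
proof (rule LIMSEQ_le_const2)
  show "(\<lambda>k. \<bar>\<Sum>j<k. c j * s powr (\<alpha> * real j + a - 1) / Gamma (\<alpha> * real j + a)\<bar>) \<longlonglongrightarrow> \<bar>Sr \<alpha> c a s\<bar>"
    using Sr_LIMSEQ[OF al a AC] s by (intro tendsto_rabs) simp
  show "\<exists>N. \<forall>n\<ge>N. \<bar>\<Sum>j<n. c j * s powr (\<alpha> * real j + a - 1) / Gamma (\<alpha> * real j + a)\<bar>
          \<le> (\<Sum>j. \<bar>c j\<bar> * r powr (\<alpha> * real j) / Gamma (\<alpha> * real j + a)) * s powr (a - 1)"
    using partial_bound[OF al a AC s] by blast
qed


lemma conv2a:
  assumes al: "\<alpha> > 0" and a: "a > 0" and b: "b > 0" and r: "r > 0"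
    and ACc: "ACr \<alpha> c a" and ACd: "ACr \<alpha> d b"
  shows "(\<lambda>s. Sr \<alpha> c a (r - s) * Sr \<alpha> d b s) integrable_on {0..r}"
    and "(\<lambda>i. c i * Sr \<alpha> d (b + (\<alpha> * real i + a)) r) sums integral {0..r} (\<lambda>s. Sr \<alpha> c a (r - s) * Sr \<alpha> d b s)"
proof -
  define t where "t i x = c i * x powr (\<alpha> * real i + a - 1) / Gamma (\<alpha> * real i + a)" for i x
  define Kc where "Kc = (\<Sum>j. \<bar>c j\<bar> * r powr (\<alpha> * real j) / Gamma (\<alpha> * real j + a))"
  define Kd where "Kd = (\<Sum>j. \<bar>d j\<bar> * r powr (\<alpha> * real j) / Gamma (\<alpha> * real j + b))"
  define F where "F k s = (\<Sum>i<k. t i (r - s)) * Sr \<alpha> d b s" for k s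
  define h where "h s = Kc * Kd * ((r - s) powr (a - 1) * s powr (b - 1))" for s
  define v where "v i = c i * Sr \<alpha> d (b + (\<alpha> * real i + a)) r" for i
  have Kc: "Kc \<ge> 0" unfolding Kc_def using K_nonneg[OF ACc _ a r] al by simp
  have Kd: "Kd \<ge> 0" unfolding Kd_def using K_nonneg[OF ACd _ b r] al by simp
  have Fint: "(F k has_integral (\<Sum>i<k. v i)) {0..r}" for k
  proof -
    have "((\<lambda>s. t i (r - s) * Sr \<alpha> d b s) has_integral v i) {0..r}" for i
    proof -
      let ?q = "\<alpha> * real i + a"
      have q: "?q > 0" using al a by (simp add: add_nonneg_pos)
      have G: "Gamma ?q > 0" using q by (auto intro!: Gamma_real_pos)
      from has_integral_mult_right[OF conv1[OF al b q r ACd], of "c i / Gamma ?q"]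
      have I: "((\<lambda>s. c i / Gamma ?q * ((r - s) powr (?q - 1) * Sr \<alpha> d b s)) has_integral
                c i / Gamma ?q * (Gamma ?q * Sr \<alpha> d (b + ?q) r)) {0..r}" .
      have e1: "c i / Gamma ?q * (Gamma ?q * Sr \<alpha> d (b + ?q) r) = v i"
        using G unfolding v_def by simp
      have e2: "(\<lambda>s. c i / Gamma ?q * ((r - s) powr (?q - 1) * Sr \<alpha> d b s)) = (\<lambda>s. t i (r - s) * Sr \<alpha> d b s)"
        by (rule ext) (simp add: t_def)
      show ?thesis using I unfolding e1 e2 .
    qed
    then have "((\<lambda>s. \<Sum>i<k. t i (r - s) * Sr \<alpha> d b s) has_integral (\<Sum>i<k. v i)) {0..r}"
      by (intro has_integral_sum) auto
    thus ?thesis unfolding F_def by (simp add: sum_distrib_right)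
  qed
  have hint: "h integrable_on {0..r}"
    unfolding h_def using has_integral_mult_right[OF beta_scaled[OF a b r], of "Kc * Kd"]
    by (rule has_integral_integrable)
  have bound: "norm (F k s) \<le> h s" if "s \<in> {0..r}" for k s
  proof (cases "s = 0 \<or> s = r")
    case True
    hence "F k s = 0" by (auto simp: F_def t_def Sr_0)
    moreover have "h s \<ge> 0" unfolding h_def using Kc Kd by simp
    ultimately show ?thesis by simp
  next
    case False
    then have s: "s > 0" "s < r" using that by auto
    have b1: "\<bar>\<Sum>i<k. t i (r - s)\<bar> \<le> Kc * (r - s) powr (a - 1)"
      unfolding t_def Kc_def using partial_bound[OF al a ACc, of "r - s" r k] s by simp
    have b2: "\<bar>Sr \<alpha> d b s\<bar> \<le> Kd * s powr (b - 1)"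
      unfolding Kd_def using Sr_bound[OF al b ACd, of s r] s by simp
    have "\<bar>F k s\<bar> \<le> (Kc * (r - s) powr (a - 1)) * (Kd * s powr (b - 1))"
      unfolding F_def abs_mult using Kc by (intro mult_mono b1 b2) auto
    thus ?thesis by (simp add: h_def mult_ac)
  qed
  have conv: "(\<lambda>k. F k s) \<longlonglongrightarrow> Sr \<alpha> c a (r - s) * Sr \<alpha> d b s" if "s \<in> {0..r}" for s
    unfolding F_def t_def using that by (intro tendsto_mult_right Sr_LIMSEQ[OF al a ACc]) simp
  note DC = dominated_convergence[OF has_integral_integrable[OF Fint] hint bound conv]
  show "(\<lambda>s. Sr \<alpha> c a (r - s) * Sr \<alpha> d b s) integrable_on {0..r}" by (rule DC(1))
  have eqI: "(\<lambda>k. integral {0..r} (F k)) = (\<lambda>k. \<Sum>i<k. v i)"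
    by (rule ext, rule integral_unique[OF Fint])
  have "(\<lambda>k. \<Sum>i<k. v i) \<longlonglongrightarrow> integral {0..r} (\<lambda>s. Sr \<alpha> c a (r - s) * Sr \<alpha> d b s)"
    using DC(2) unfolding eqI .
  thus "v sums integral {0..r} (\<lambda>s. Sr \<alpha> c a (r - s) * Sr \<alpha> d b s)"
    unfolding sums_def .
qed


definition cv :: "(nat \<Rightarrow> real) \<Rightarrow> (nat \<Rightarrow> real) \<Rightarrow> nat \<Rightarrow> real" where
  "cv c d n = (\<Sum>i\<le>n. c i * d (n - i))"

lemma ACr_abs_iff: "ACr \<alpha> (\<lambda>i. \<bar>c i\<bar>) a \<longleftrightarrow> ACr \<alpha> c a"
  by (simp add: ACr_def)

lemma conv2_main:
  assumes al: "\<alpha> > 0" and a: "a > 0" and b: "b > 0" and r: "r > 0"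
    and ACc: "ACr \<alpha> c a" and ACd: "ACr \<alpha> d b"
  shows "((\<lambda>s. Sr \<alpha> c a (r - s) * Sr \<alpha> d b s) has_integral Sr \<alpha> (cv c d) (a + b) r) {0..r}"
    and "summable (\<lambda>n. \<bar>cv c d n\<bar> * r powr (\<alpha> * real n) / Gamma (\<alpha> * real n + (a + b)))"
proof -
  define W where "W n = r powr (\<alpha> * real n + (a + b) - 1) / Gamma (\<alpha> * real n + (a + b))" for n
  define u where "u i j = c i * (d j * W (i + j))" for i j
  have W0: "W n \<ge> 0" for n unfolding W_def using Gamma_pos_aux[of \<alpha> "a+b" n] al a b by simp
  have ex: "\<alpha> * real j + (b + (\<alpha> * real i + a)) = \<alpha> * real (i + j) + (a + b)" for i j
    by (simp add: algebra_simps)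
  have SrW: "Sr \<alpha> e (b + (\<alpha> * real i + a)) r = (\<Sum>j. e j * W (i + j))" for e i
    unfolding Sr_def W_def ex by (simp add: mult_ac)
  have q: "\<alpha> * real i + a > 0" for i using al a by (simp add: add_nonneg_pos)
  have sumd: "summable (\<lambda>j. e j * W (i + j))" if "ACr \<alpha> e b" for e i
  proof -
    have "ACr \<alpha> e (b + (\<alpha> * real i + a))" by (rule ACr_shift[OF that _ b q]) (use al in simp)
    from ACr_summable[OF this r] al b q[of i]
    show ?thesis unfolding W_def ex[symmetric] by (simp add: mult_ac add_pos_pos)
  qed
  have A1: "summable (\<lambda>j. \<bar>u i j\<bar>)" for i
  proof -
    have "summable (\<lambda>j. \<bar>c i\<bar> * (\<bar>d j\<bar> * W (i + j)))"
      by (intro summable_mult sumd) (simp add: ACr_abs_iff ACd)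
    thus ?thesis by (simp add: u_def abs_mult W0)
  qed
  have absu: "(\<Sum>j. \<bar>u i j\<bar>) = \<bar>c i\<bar> * Sr \<alpha> (\<lambda>i. \<bar>d i\<bar>) (b + (\<alpha> * real i + a)) r" for i
  proof -
    have "(\<Sum>j. \<bar>u i j\<bar>) = (\<Sum>j. \<bar>c i\<bar> * (\<bar>d j\<bar> * W (i + j)))"
      by (simp add: u_def abs_mult W0)
    also have "\<dots> = \<bar>c i\<bar> * (\<Sum>j. \<bar>d j\<bar> * W (i + j))"
      by (intro suminf_mult sumd) (simp add: ACr_abs_iff ACd)
    finally show ?thesis unfolding SrW .
  qed
  have A2: "summable (\<lambda>i. \<Sum>j. \<bar>u i j\<bar>)"
    unfolding absu
    using conv2a(2)[OF al a b r, of "\<lambda>i. \<bar>c i\<bar>" "\<lambda>i. \<bar>d i\<bar>"] ACc ACd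
    by (auto simp: ACr_abs_iff sums_iff)
  have rowsum: "(\<Sum>j. u i j) = c i * Sr \<alpha> d (b + (\<alpha> * real i + a)) r" for i
    unfolding SrW u_def by (intro suminf_mult sumd ACd)
  have "(\<lambda>n. \<Sum>i\<le>n. u i (n - i)) sums (\<Sum>i. \<Sum>j. u i j)"
    by (rule double_series_core[OF A1 A2])
  moreover have "(\<Sum>i. \<Sum>j. u i j) = integral {0..r} (\<lambda>s. Sr \<alpha> c a (r - s) * Sr \<alpha> d b s)"
    unfolding rowsum using conv2a(2)[OF al a b r ACc ACd] by (simp add: sums_iff)
  moreover have "(\<Sum>i\<le>n. u i (n - i)) = cv c d n * r powr (\<alpha> * real n + (a + b) - 1) / Gamma (\<alpha> * real n + (a + b))" for n
    unfolding u_def cv_def W_def by (simp add: sum_distrib_right sum_divide_distrib mult_ac)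
  ultimately have "(\<lambda>n. cv c d n * r powr (\<alpha> * real n + (a + b) - 1) / Gamma (\<alpha> * real n + (a + b))) sums
                   integral {0..r} (\<lambda>s. Sr \<alpha> c a (r - s) * Sr \<alpha> d b s)" by simp
  hence "Sr \<alpha> (cv c d) (a + b) r = integral {0..r} (\<lambda>s. Sr \<alpha> c a (r - s) * Sr \<alpha> d b s)"
    unfolding Sr_def by (simp add: sums_iff)
  thus "((\<lambda>s. Sr \<alpha> c a (r - s) * Sr \<alpha> d b s) has_integral Sr \<alpha> (cv c d) (a + b) r) {0..r}"
    using integrable_integral[OF conv2a(1)[OF al a b r ACc ACd]] by simp
  have A1': "summable (\<lambda>j. \<bar>\<bar>u i j\<bar>\<bar>)" for i using A1[of i] by simp
  have A2': "summable (\<lambda>i. \<Sum>j. \<bar>\<bar>u i j\<bar>\<bar>)" using A2 by simp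
  have "summable (\<lambda>n. \<Sum>i\<le>n. \<bar>u i (n - i)\<bar>)"
    using double_series_core[of "\<lambda>i j. \<bar>u i j\<bar>", OF A1' A2'] by (simp add: sums_iff)
  hence S: "summable (\<lambda>n. r powr (1 - (a + b)) * (\<Sum>i\<le>n. \<bar>u i (n - i)\<bar>))"
    by (rule summable_mult)
  show "summable (\<lambda>n. \<bar>cv c d n\<bar> * r powr (\<alpha> * real n) / Gamma (\<alpha> * real n + (a + b)))"
  proof (rule summable_comparison_test'[OF S])
    fix n
    have G: "Gamma (\<alpha> * real n + (a + b)) > 0" using Gamma_pos_aux[of \<alpha> "a+b" n] al a b by simp
    have "\<bar>cv c d n\<bar> \<le> (\<Sum>i\<le>n. \<bar>c i\<bar> * \<bar>d (n - i)\<bar>)"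
      unfolding cv_def by (rule order.trans[OF sum_abs]) (simp add: abs_mult)
    hence "\<bar>cv c d n\<bar> * W n \<le> (\<Sum>i\<le>n. \<bar>c i\<bar> * \<bar>d (n - i)\<bar>) * W n"
      by (rule mult_right_mono) (rule W0)
    also have "\<dots> = (\<Sum>i\<le>n. \<bar>u i (n - i)\<bar>)"
      by (simp add: u_def abs_mult W0 sum_distrib_right sum_distrib_left mult_ac)
    finally have le: "\<bar>cv c d n\<bar> * W n \<le> (\<Sum>i\<le>n. \<bar>u i (n - i)\<bar>)" .
    have "\<bar>cv c d n\<bar> * r powr (\<alpha> * real n) / Gamma (\<alpha> * real n + (a + b)) = r powr (1 - (a + b)) * (\<bar>cv c d n\<bar> * W n)"
      unfolding W_def using r G by (simp add: field_simps powr_add[symmetric])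
    also have "\<dots> \<le> r powr (1 - (a + b)) * (\<Sum>i\<le>n. \<bar>u i (n - i)\<bar>)"
      by (intro mult_left_mono le) simp
    finally show "norm (\<bar>cv c d n\<bar> * r powr (\<alpha> * real n) / Gamma (\<alpha> * real n + (a + b))) \<le> r powr (1 - (a + b)) * (\<Sum>i\<le>n. \<bar>u i (n - i)\<bar>)"
      using G by simp
  qed
qed

lemma XD_nth: "fps_nth (fps_X * fps_deriv f) m = of_nat m * (fps_nth f m :: real)"
  by (cases m) (simp_all add: fps_deriv_nth)

lemma miller:
  fixes a :: "nat \<Rightarrow> real" and L n :: nat
  assumes L: "L \<ge> 1"
  shows "a 0 * real n * fps_nth (Abs_fps a ^ L) n =
         (\<Sum>h\<in>{1..n}. fps_nth (Abs_fps a ^ L) (n - h) * a h * (real (h * L + h) - real n))"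
proof -
  define A where "A = Abs_fps a"
  define B where "B = A ^ L"
  obtain k where k: "L = Suc k" using L by (cases L) auto
  have "fps_deriv B = fps_const (of_nat L) * fps_deriv A * A ^ k"
    unfolding B_def fps_deriv_power by (simp add: k)
  hence "A * fps_deriv B = fps_const (of_nat L) * fps_deriv A * B"
    unfolding B_def k by (simp add: mult_ac)
  hence "A * (fps_X * fps_deriv B) = fps_const (of_nat L) * ((fps_X * fps_deriv A) * B)"
    by (metis mult.assoc mult.left_commute)
  hence "fps_nth (A * (fps_X * fps_deriv B)) n = fps_nth (fps_const (of_nat L) * ((fps_X * fps_deriv A) * B)) n"
    by (rule arg_cong)
  hence E': "(\<Sum>h=0..n. fps_nth A h * fps_nth (fps_X * fps_deriv B) (n - h)) = real L * (\<Sum>h=0..n. fps_nth (fps_X * fps_deriv A) h * fps_nth B (n - h))"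
    unfolding fps_mult_left_const_nth fps_mult_nth[of A "fps_X * fps_deriv B"] fps_mult_nth[of "fps_X * fps_deriv A" B] .
  hence E: "(\<Sum>h=0..n. a h * (real (n - h) * fps_nth B (n - h))) = real L * (\<Sum>h=0..n. real h * a h * fps_nth B (n - h))"
    by (simp only: XD_nth A_def fps_nth_Abs_fps mult_ac)
  have E0: "(\<Sum>h=0..n. a h * (real (n - h) * fps_nth B (n - h))) = a 0 * real n * fps_nth B n + (\<Sum>h=1..n. a h * (real (n - h) * fps_nth B (n - h)))"
    by (simp add: sum.atLeast_Suc_atMost)
  have E1: "(\<Sum>h=0..n. real h * a h * fps_nth B (n - h)) = (\<Sum>h=1..n. real h * a h * fps_nth B (n - h))"
    by (simp add: sum.atLeast_Suc_atMost)
  have "a 0 * real n * fps_nth B n = real L * (\<Sum>h=1..n. real h * a h * fps_nth B (n - h)) - (\<Sum>h=1..n. a h * (real (n - h) * fps_nth B (n - h)))"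
    using E E0 E1 by (smt (verit))
  also have "\<dots> = (\<Sum>h=1..n. fps_nth B (n - h) * a h * (real (h * L + h) - real n))"
    unfolding sum_distrib_left sum_subtractf[symmetric]
    by (intro sum.cong refl) (auto simp: of_nat_diff algebra_simps)
  finally show ?thesis unfolding B_def A_def .
qed


lemma delta_eq:
  assumes l0: "lam \<alpha> T rh \<phi> 0 \<noteq> 0" and L: "L \<ge> 1"
  shows "delta \<alpha> T rh \<phi> L i = fps_nth (Abs_fps (lam \<alpha> T rh \<phi>) ^ L) i"
proof (induction i rule: less_induct)
  case (less i)
  define b where "b = fps_nth (Abs_fps (lam \<alpha> T rh \<phi>) ^ L)"
  show ?case
  proof (cases "i = 0")
    case True then show ?thesis by (subst delta.simps) (simp del: delta.simps add: fps_power_zeroth)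
  next
    case False
    have "delta \<alpha> T rh \<phi> L i = 1 / (real i * lam \<alpha> T rh \<phi> 0) *
        (\<Sum>h\<in>{1..i}. delta \<alpha> T rh \<phi> L (i - h) * lam \<alpha> T rh \<phi> h * (real (h * L + h) - real i))"
      by (subst delta.simps) (simp del: delta.simps add: False)
    also have "\<dots> = 1 / (real i * lam \<alpha> T rh \<phi> 0) *
        (\<Sum>h\<in>{1..i}. b (i - h) * lam \<alpha> T rh \<phi> h * (real (h * L + h) - real i))"
    proof -
      have "delta \<alpha> T rh \<phi> L (i - h) = b (i - h)" if "h \<in> {1..i}" for h
      proof -
        have "i - h < i" using that False by auto
        thus ?thesis unfolding b_def by (rule less.IH)
      qed
      thus ?thesis by (simp del: delta.simps)
    qed
    also have "\<dots> = 1 / (real i * lam \<alpha> T rh \<phi> 0) * (lam \<alpha> T rh \<phi> 0 * real i * b i)"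
      unfolding b_def using miller[OF L, of "lam \<alpha> T rh \<phi>" i] by simp
    also have "\<dots> = b i" using False l0 by simp
    finally show ?thesis unfolding b_def .
  qed
qed

lemma lam_KI:
  fixes \<alpha> T rh r :: real and \<phi> :: "nat \<Rightarrow> real"
  assumes al: "\<alpha> > 0" and T: "T > 0" and rh: "rh > 0" and r: "r > 0"
  defines "x \<equiv> r powr \<alpha> / rh powr \<alpha>"
  defines "ea \<equiv> (\<lambda>k. (- x) ^ k / fact k)"
  defines "bb \<equiv> (\<lambda>j. \<phi> j * r powr (\<alpha> * (real j + T) - 1) / (rh powr (\<alpha> * (real j + T)) * Gamma (real j + T)))"
  shows "(\<Sum>k\<le>n. ea k * bb (n - k)) = lam \<alpha> T rh \<phi> n * r powr (\<alpha> * real n + \<alpha> * T - 1) / (Gamma (\<alpha> * real n + \<alpha> * T) * rh powr (\<alpha> * T))"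
proof -
  define C where "C = r powr (\<alpha> * real n + \<alpha> * T - 1) / (rh powr (\<alpha> * T) * rh powr (\<alpha> * real n))"
  have trm: "ea k * bb (n - k) = (-1) ^ k * \<phi> (n - k) / (fact k * Gamma (real (n - k) + T)) * C" if "k \<le> n" for k
  proof -
    have G: "Gamma (real (n - k) + T) > 0" using T by (intro Gamma_real_pos) simp
    have e1: "x ^ k = r powr (\<alpha> * real k) / rh powr (\<alpha> * real k)"
      unfolding x_def power_divide using r rh by (simp add: powr_power mult_ac)
    have e2: "r powr (\<alpha> * real k) * r powr (\<alpha> * (real (n - k) + T) - 1) = r powr (\<alpha> * real n + \<alpha> * T - 1)"
      unfolding powr_add[symmetric] using that by (simp add: of_nat_diff algebra_simps)
    have e3: "rh powr (\<alpha> * real k) * rh powr (\<alpha> * (real (n - k) + T)) = rh powr (\<alpha> * T) * rh powr (\<alpha> * real n)"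
      unfolding powr_add[symmetric] using that by (simp add: of_nat_diff algebra_simps)
    have "ea k * bb (n - k) = ((-1) ^ k * (r powr (\<alpha> * real k) / rh powr (\<alpha> * real k))) / fact k *
             (\<phi> (n - k) * r powr (\<alpha> * (real (n - k) + T) - 1) / (rh powr (\<alpha> * (real (n - k) + T)) * Gamma (real (n - k) + T)))"
      unfolding ea_def bb_def power_minus[of x k] e1 by simp
    also have "\<dots> = (-1) ^ k * \<phi> (n - k) / (fact k * Gamma (real (n - k) + T)) *
        ((r powr (\<alpha> * real k) * r powr (\<alpha> * (real (n - k) + T) - 1)) / (rh powr (\<alpha> * real k) * rh powr (\<alpha> * (real (n - k) + T))))"
      using G rh by (simp add: field_simps)
    also have "\<dots> = (-1) ^ k * \<phi> (n - k) / (fact k * Gamma (real (n - k) + T)) * C"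
      unfolding e2 e3 C_def by (rule refl)
    finally show ?thesis .
  qed
  have "(\<Sum>k\<le>n. ea k * bb (n - k)) = (\<Sum>k\<le>n. (-1) ^ k * \<phi> (n - k) / (fact k * Gamma (real (n - k) + T))) * C"
    by (simp add: trm sum_distrib_right)
  also have "(\<Sum>k\<le>n. (-1) ^ k * \<phi> (n - k) / (fact k * Gamma (real (n - k) + T))) =
             (\<Sum>j\<le>n. (-1) ^ (n - j) * \<phi> j / (fact (n - j) * Gamma (real j + T)))"
    unfolding atLeast0AtMost[symmetric]
    by (subst sum.atLeastAtMost_rev) (intro sum.cong refl, auto)
  also have "\<dots> * C = lam \<alpha> T rh \<phi> n * r powr (\<alpha> * real n + \<alpha> * T - 1) / (Gamma (\<alpha> * real n + \<alpha> * T) * rh powr (\<alpha> * T))"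
  proof -
    have G: "Gamma (\<alpha> * real n + \<alpha> * T) > 0" using al T by (intro Gamma_real_pos) (simp add: add_nonneg_pos)
    have eg: "\<alpha> * (real n + T) = \<alpha> * real n + \<alpha> * T" by (simp add: algebra_simps)
    show ?thesis unfolding lam_def C_def eg using G rh by (simp add: field_simps)
  qed
  finally show ?thesis .
qed


lemma pdf_f_Sr:
  fixes \<alpha> T rh r :: real and \<phi> :: "nat \<Rightarrow> real"
  assumes al: "\<alpha> > 0" and T: "T > 0" and rh: "rh > 0" and r: "r > 0"
    and S: "summable (\<lambda>i. \<bar>\<phi> i * r powr (\<alpha> * (real i + T) - 1) / (rh powr (\<alpha> * (real i + T)) * Gamma (real i + T))\<bar>)"
  shows "pdf_f \<alpha> T rh \<phi> r = \<alpha> / rh powr (\<alpha> * T) * Sr \<alpha> (lam \<alpha> T rh \<phi>) (\<alpha> * T) r"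
    and "summable (\<lambda>n. \<bar>lam \<alpha> T rh \<phi> n\<bar> * r powr (\<alpha> * real n) / Gamma (\<alpha> * real n + \<alpha> * T))"
proof -
  define x where "x = r powr \<alpha> / rh powr \<alpha>"
  define ea where "ea = (\<lambda>k. (- x) ^ k / fact k)"
  define bb where "bb = (\<lambda>j. \<phi> j * r powr (\<alpha> * (real j + T) - 1) / (rh powr (\<alpha> * (real j + T)) * Gamma (real j + T)))"
  define l where "l = lam \<alpha> T rh \<phi>"
  define w where "w n = l n * r powr (\<alpha> * real n + \<alpha> * T - 1) / Gamma (\<alpha> * real n + \<alpha> * T)" for n
  have KI: "(\<Sum>k\<le>n. ea k * bb (n - k)) = w n / rh powr (\<alpha> * T)" for n
    using lam_KI[OF al T rh r, where n=n and \<phi>=\<phi>] unfolding ea_def bb_def x_def w_def l_def by simp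
  have eaexp: "(- x) ^ n /\<^sub>R fact n = ea n" for n by (simp add: ea_def divide_inverse mult.commute)
  have ea_abs: "summable (\<lambda>k. norm (ea k))" using summable_norm_exp[of "- x"] unfolding eaexp .
  have ea_sum: "ea sums exp (- x)" using exp_converges[of "- x"] unfolding eaexp .
  have bb_abs: "summable (\<lambda>k. norm (bb k))" using S unfolding bb_def real_norm_def .
  have "(\<lambda>n. \<Sum>k\<le>n. ea k * bb (n - k)) sums (suminf ea * suminf bb)"
    by (rule Cauchy_product_sums[OF ea_abs bb_abs])
  moreover have eaS: "suminf ea = exp (- x)" using sums_unique[OF ea_sum] by simp
  ultimately have "(\<lambda>n. w n / rh powr (\<alpha> * T)) sums (exp (- x) * suminf bb)"
    unfolding KI eaS by blast
  hence "(\<lambda>n. w n / rh powr (\<alpha> * T) * rh powr (\<alpha> * T)) sums (exp (- x) * suminf bb * rh powr (\<alpha> * T))"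
    by (rule sums_mult2)
  moreover have "(\<lambda>n. w n / rh powr (\<alpha> * T) * rh powr (\<alpha> * T)) = w"
    using rh by (simp add: fun_eq_iff)
  ultimately have "w sums (exp (- x) * suminf bb * rh powr (\<alpha> * T))" by simp
  hence Sr_eq: "Sr \<alpha> l (\<alpha> * T) r = exp (- x) * suminf bb * rh powr (\<alpha> * T)"
    unfolding Sr_def w_def by (simp add: sums_iff)
  have "pdf_f \<alpha> T rh \<phi> r = \<alpha> * exp (- x) * suminf bb"
    unfolding pdf_f_def x_def bb_def minus_divide_left by (rule refl)
  also have "\<dots> = \<alpha> / rh powr (\<alpha> * T) * Sr \<alpha> l (\<alpha> * T) r"
    unfolding Sr_eq using rh by simp
  finally show "pdf_f \<alpha> T rh \<phi> r = \<alpha> / rh powr (\<alpha> * T) * Sr \<alpha> (lam \<alpha> T rh \<phi>) (\<alpha> * T) r"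
    unfolding l_def .
  have ea_abs': "summable (\<lambda>k. norm (norm (ea k)))" using ea_abs by simp
  have bb_abs': "summable (\<lambda>k. norm (norm (bb k)))" using bb_abs by simp
  have "summable (\<lambda>n. \<Sum>k\<le>n. norm (ea k) * norm (bb (n - k)))"
    by (rule summable_Cauchy_product[OF ea_abs' bb_abs'])
  hence S2: "summable (\<lambda>n. (rh powr (\<alpha> * T) * r powr (1 - \<alpha> * T)) * (\<Sum>k\<le>n. norm (ea k) * norm (bb (n - k))))"
    by (rule summable_mult)
  show "summable (\<lambda>n. \<bar>lam \<alpha> T rh \<phi> n\<bar> * r powr (\<alpha> * real n) / Gamma (\<alpha> * real n + \<alpha> * T))"
  proof (rule summable_comparison_test'[OF S2])
    fix n
    have G: "Gamma (\<alpha> * real n + \<alpha> * T) > 0" using al T by (intro Gamma_real_pos) (simp add: add_nonneg_pos)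
    have "\<bar>w n / rh powr (\<alpha> * T)\<bar> \<le> (\<Sum>k\<le>n. norm (ea k) * norm (bb (n - k)))"
      unfolding KI[symmetric] by (rule order.trans[OF sum_abs]) (simp add: abs_mult)
    hence "(rh powr (\<alpha> * T) * r powr (1 - \<alpha> * T)) * \<bar>w n / rh powr (\<alpha> * T)\<bar> \<le>
           (rh powr (\<alpha> * T) * r powr (1 - \<alpha> * T)) * (\<Sum>k\<le>n. norm (ea k) * norm (bb (n - k)))"
      by (rule mult_left_mono) simp
    moreover have "(rh powr (\<alpha> * T) * r powr (1 - \<alpha> * T)) * \<bar>w n / rh powr (\<alpha> * T)\<bar> =
                   \<bar>l n\<bar> * r powr (\<alpha> * real n) / Gamma (\<alpha> * real n + \<alpha> * T)"
    proof -
      have "r powr (1 - \<alpha> * T) * r powr (\<alpha> * real n + \<alpha> * T - 1) = r powr (\<alpha> * real n)"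
        by (simp add: powr_add[symmetric])
      moreover have "\<bar>w n / rh powr (\<alpha> * T)\<bar> = \<bar>l n\<bar> * r powr (\<alpha> * real n + \<alpha> * T - 1) / (Gamma (\<alpha> * real n + \<alpha> * T) * rh powr (\<alpha> * T))"
        unfolding w_def using G rh by (simp add: abs_mult abs_divide)
      moreover have "(c1 * c2) * (l * R / (G * c1)) = l * (c2 * R) / G" if "c1 \<noteq> 0" "G \<noteq> 0" for c1 c2 l R G :: real
        using that by (simp add: field_simps)
      ultimately show ?thesis using G rh by simp
    qed
    ultimately show "norm (\<bar>lam \<alpha> T rh \<phi> n\<bar> * r powr (\<alpha> * real n) / Gamma (\<alpha> * real n + \<alpha> * T)) \<le>
        (rh powr (\<alpha> * T) * r powr (1 - \<alpha> * T)) * (\<Sum>k\<le>n. norm (ea k) * norm (bb (n - k)))"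
      using G unfolding l_def by simp
  qed
qed

primrec pw :: "(nat \<Rightarrow> real) \<Rightarrow> nat \<Rightarrow> nat \<Rightarrow> real" where
  "pw l 0 = (\<lambda>n. if n = 0 then 1 else 0)"
| "pw l (Suc m) = cv l (pw l m)"

lemma pw_fps: "pw l m n = fps_nth (Abs_fps l ^ m) n"
proof (induction m arbitrary: n)
  case 0 then show ?case by simp
next
  case (Suc m)
  have "pw l (Suc m) n = (\<Sum>i\<le>n. l i * fps_nth (Abs_fps l ^ m) (n - i))"
    by (simp add: cv_def Suc)
  also have "\<dots> = fps_nth (Abs_fps l * Abs_fps l ^ m) n"
    by (simp add: fps_mult_nth atLeast0AtMost)
  finally show ?case by simp
qed

lemma pw_1: "pw l 1 = l"
proof (rule ext)
  fix n
  have "pw l 1 n = (\<Sum>i\<le>n. if i = n then l i else 0)"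
    unfolding One_nat_def pw.simps cv_def by (intro sum.cong refl) auto
  also have "\<dots> = l n" by (simp add: sum.delta')
  finally show "pw l 1 n = l n" .
qed

definition dens :: "real \<Rightarrow> (nat \<Rightarrow> real) \<Rightarrow> real \<Rightarrow> real \<Rightarrow> nat \<Rightarrow> real \<Rightarrow> ennreal" where
  "dens \<alpha> l a C0 m x = ennreal (if x \<ge> 0 then C0 ^ m * Sr \<alpha> (pw l m) (a * real m) x else 0)"

lemma conv_density_eq:
  assumes al: "\<alpha> > 0" and a: "a > 0" and C0: "C0 > 0" and m: "m \<ge> 1"
    and ACl: "ACr \<alpha> l a" and ACm: "ACr \<alpha> (pw l m) (a * real m)"
    and nn1: "\<And>x. x \<ge> 0 \<Longrightarrow> 0 \<le> Sr \<alpha> l a x"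
    and nnm: "\<And>x. x \<ge> 0 \<Longrightarrow> 0 \<le> Sr \<alpha> (pw l m) (a * real m) x"
  shows "(\<lambda>x. \<integral>\<^sup>+y. dens \<alpha> l a C0 1 (x - y) * dens \<alpha> l a C0 m y \<partial>lborel) = dens \<alpha> l a C0 (Suc m)"
    and "ACr \<alpha> (pw l (Suc m)) (a * real (Suc m))"
    and "\<And>x. x \<ge> 0 \<Longrightarrow> 0 \<le> Sr \<alpha> (pw l (Suc m)) (a * real (Suc m)) x"
proof -
  have b: "a * real m > 0" using a m by simp
  have ea: "a + a * real m = a * real (Suc m)" by (simp add: algebra_simps)
  have D1: "dens \<alpha> l a C0 1 z = ennreal (if z \<ge> 0 then C0 * Sr \<alpha> l a z else 0)" for z
    unfolding dens_def pw_1 by simp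
  have HI: "((\<lambda>y. (C0 * Sr \<alpha> l a (x - y)) * (C0 ^ m * Sr \<alpha> (pw l m) (a * real m) y)) has_integral
             C0 ^ Suc m * Sr \<alpha> (pw l (Suc m)) (a * real (Suc m)) x) {0..x}" if x: "x > 0" for x
  proof -
    from has_integral_mult_right[OF conv2_main(1)[OF al a b x ACl ACm], of "C0 ^ Suc m"]
    show ?thesis unfolding ea by (simp add: mult_ac)
  qed
  show "ACr \<alpha> (pw l (Suc m)) (a * real (Suc m))"
    unfolding ACr_def using conv2_main(2)[OF al a b _ ACl ACm] ea by simp
  have nnS: "0 \<le> Sr \<alpha> (pw l (Suc m)) (a * real (Suc m)) x" if "x \<ge> 0" for x
  proof (cases "x = 0")
    case True then show ?thesis by (simp add: Sr_0)
  next
    case False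
    hence x: "x > 0" using that by simp
    have "0 \<le> C0 ^ Suc m * Sr \<alpha> (pw l (Suc m)) (a * real (Suc m)) x"
      by (rule has_integral_nonneg[OF HI[OF x]]) (use C0 nn1 nnm in \<open>auto intro!: mult_nonneg_nonneg\<close>)
    moreover have p: "C0 ^ Suc m > 0" using C0 by simp
    ultimately show ?thesis by (metis mult_pos_neg not_le)
  qed
  thus "\<And>x. x \<ge> 0 \<Longrightarrow> 0 \<le> Sr \<alpha> (pw l (Suc m)) (a * real (Suc m)) x" .
  show "(\<lambda>x. \<integral>\<^sup>+y. dens \<alpha> l a C0 1 (x - y) * dens \<alpha> l a C0 m y \<partial>lborel) = dens \<alpha> l a C0 (Suc m)"
  proof (rule ext)
    fix x :: real
    show "(\<integral>\<^sup>+y. dens \<alpha> l a C0 1 (x - y) * dens \<alpha> l a C0 m y \<partial>lborel) = dens \<alpha> l a C0 (Suc m) x"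
    proof (cases "x > 0")
      case False
      have z: "dens \<alpha> l a C0 1 (x - y) * dens \<alpha> l a C0 m y = 0" for y
        using False by (cases "y = 0") (auto simp: D1 dens_def Sr_0)
      have "(\<integral>\<^sup>+y. dens \<alpha> l a C0 1 (x - y) * dens \<alpha> l a C0 m y \<partial>lborel) = (\<integral>\<^sup>+(y::real). 0 \<partial>lborel)"
        by (simp only: z)
      moreover have "dens \<alpha> l a C0 (Suc m) x = 0"
        using False by (cases "x = 0") (auto simp: dens_def Sr_0)
      ultimately show ?thesis by simp
    next
      case True
      have eq: "dens \<alpha> l a C0 1 (x - y) * dens \<alpha> l a C0 m y =
          ennreal ((C0 * Sr \<alpha> l a (x - y)) * (C0 ^ m * Sr \<alpha> (pw l m) (a * real m) y)) * indicator {0..x} y" for y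
      proof (cases "y \<in> {0..x}")
        case True
        hence "0 \<le> C0 * Sr \<alpha> l a (x - y)" "0 \<le> C0 ^ m * Sr \<alpha> (pw l m) (a * real m) y"
          using C0 nn1 nnm by auto
        thus ?thesis using True unfolding D1 dens_def[of _ _ _ _ m] by (simp add: ennreal_mult)
      next
        case False
        thus ?thesis by (auto simp: D1 dens_def)
      qed
      have "(\<integral>\<^sup>+y. dens \<alpha> l a C0 1 (x - y) * dens \<alpha> l a C0 m y \<partial>lborel) =
            ennreal (C0 ^ Suc m * Sr \<alpha> (pw l (Suc m)) (a * real (Suc m)) x)"
        unfolding eq
        by (rule nn_integral_has_integral_lebesgue'[OF _ HI[OF True]]) (use C0 nn1 nnm in auto)
      thus ?thesis using True by (simp add: dens_def)
    qed
  qed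
qed


lemma (in prob_space) sum_distributed:
  fixes R :: "nat \<Rightarrow> 'a \<Rightarrow> real"
  assumes al: "\<alpha> > 0" and a: "a > 0" and C0: "C0 > 0"
    and ACl: "ACr \<alpha> l a" and nn1: "\<And>x. x \<ge> 0 \<Longrightarrow> 0 \<le> Sr \<alpha> l a x"
    and fin: "finite I" and ne: "I \<noteq> {}"
    and ind: "indep_vars (\<lambda>_. borel) R I"
    and dist: "\<And>i. i \<in> I \<Longrightarrow> distributed M lborel (R i) (dens \<alpha> l a C0 1)"
  shows "distributed M lborel (\<lambda>\<omega>. \<Sum>i\<in>I. R i \<omega>) (dens \<alpha> l a C0 (card I)) \<and>
         ACr \<alpha> (pw l (card I)) (a * real (card I)) \<and>
         (\<forall>x\<ge>0. 0 \<le> Sr \<alpha> (pw l (card I)) (a * real (card I)) x)"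
  using fin ne ind dist
proof (induct I rule: finite_ne_induct)
  case (singleton i)
  then show ?case using ACl nn1 by (simp add: pw_1[unfolded One_nat_def pw.simps])
next
  case (insert i I)
  have indI: "indep_vars (\<lambda>_. borel) R I"
    using insert.prems(1) by (rule indep_vars_subset) auto
  have distI: "\<And>j. j \<in> I \<Longrightarrow> distributed M lborel (R j) (dens \<alpha> l a C0 1)"
    using insert.prems(2) by auto
  have IH: "distributed M lborel (\<lambda>\<omega>. \<Sum>i\<in>I. R i \<omega>) (dens \<alpha> l a C0 (card I)) \<and>
         ACr \<alpha> (pw l (card I)) (a * real (card I)) \<and>
         (\<forall>x\<ge>0. 0 \<le> Sr \<alpha> (pw l (card I)) (a * real (card I)) x)"
    using insert.hyps(4)[OF indI distI] by blast
  define m where "m = card I"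
  have m: "m \<ge> 1" unfolding m_def using insert.hyps(1,2) by (simp add: Suc_leI card_gt_0_iff)
  have cardI: "card (insert i I) = Suc m" unfolding m_def using insert.hyps(1,3) by simp
  have ind2: "indep_var borel (R i) borel (\<lambda>\<omega>. \<Sum>i\<in>I. R i \<omega>)"
    by (rule indep_vars_sum[OF insert.hyps(1) insert.hyps(3) insert.prems(1)])
  have Di: "distributed M lborel (R i) (dens \<alpha> l a C0 1)" using insert.prems(2) by simp
  have ACm: "ACr \<alpha> (pw l m) (a * real m)" and nnm: "\<And>x. x \<ge> 0 \<Longrightarrow> 0 \<le> Sr \<alpha> (pw l m) (a * real m) x"
    using IH unfolding m_def by auto
  have Dm: "distributed M lborel (\<lambda>\<omega>. \<Sum>i\<in>I. R i \<omega>) (dens \<alpha> l a C0 m)"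
    using IH unfolding m_def by (elim conjE)
  note CE = conv_density_eq[OF al a C0 m ACl ACm nn1 nnm]
  have DC: "distributed M lborel (\<lambda>\<omega>. R i \<omega> + (\<Sum>i\<in>I. R i \<omega>))
          (dens \<alpha> l a C0 (Suc m))"
    apply (subst CE(1)[symmetric])
     apply simp
    apply (rule distributed_convolution[OF ind2 Di Dm])
    done
  have "distributed M lborel (\<lambda>\<omega>. \<Sum>i\<in>insert i I. R i \<omega>) (dens \<alpha> l a C0 (Suc m))"
    using DC insert.hyps(1,3) by simp
  thus ?case unfolding cardI using CE(2,3) by blast
qed

theorem corollary2:
  fixes M :: "'a measure" and R :: "nat \<Rightarrow> 'a \<Rightarrow> real"
    and L :: nat and \<alpha> T rh :: real and \<phi> :: "nat \<Rightarrow> real"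
  assumes "prob_space M"
    and "L \<ge> 1"
    and "\<alpha> > 0" and "T > 0" and "rh > 0"
    and "\<phi> 0 \<noteq> 0"
    and "\<forall>r\<ge>0. summable (\<lambda>i. \<bar>\<phi> i * r powr (\<alpha> * (real i + T) - 1)
                 / (rh powr (\<alpha> * (real i + T)) * Gamma (real i + T))\<bar>)"
    and "\<forall>r\<ge>0. pdf_f \<alpha> T rh \<phi> r \<ge> 0"
    and "prob_space.indep_vars M (\<lambda>_. borel) R {1..L}"
    and "\<forall>l\<in>{1..L}. distributed M lborel (R l)
           (\<lambda>r. ennreal (if r \<ge> 0 then pdf_f \<alpha> T rh \<phi> r else 0))"
  shows "distributed M lborel (\<lambda>x. \<Sum>l\<in>{1..L}. R l x)
           (\<lambda>r. ennreal (if r \<ge> 0 then pdf_sum \<alpha> T rh \<phi> L r else 0))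
       \<and> (\<forall>r\<ge>0. measure M {x \<in> space M. (\<Sum>l\<in>{1..L}. R l x) \<le> r} = cdf_sum \<alpha> T rh \<phi> L r)"
proof -
  note ps = assms(1)
  interpret ps: prob_space M by (rule ps)
  have L: "L \<ge> 1" and al: "\<alpha> > 0" and T: "T > 0" and rh: "rh > 0" and phi0: "\<phi> 0 \<noteq> 0"
    using assms(2-6) by auto
  define l where "l = lam \<alpha> T rh \<phi>"
  define a where "a = \<alpha> * T"
  define C0 where "C0 = \<alpha> / rh powr (\<alpha> * T)"
  define S where "S = (\<lambda>x. \<Sum>l\<in>{1..L}. R l x)"
  have a: "a > 0" unfolding a_def using al T by simp
  have C0: "C0 > 0" unfolding C0_def using al rh by simp
  have ACl: "ACr \<alpha> l a"
    unfolding ACr_def l_def a_def using pdf_f_Sr(2)[OF al T rh] assms(7) by auto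
  have pdfeq: "pdf_f \<alpha> T rh \<phi> r = C0 * Sr \<alpha> l a r" if "r > 0" for r
    unfolding C0_def l_def a_def using pdf_f_Sr(1)[OF al T rh that] assms(7) that by auto
  have pdf0: "pdf_f \<alpha> T rh \<phi> 0 = 0" by (simp add: pdf_f_def)
  have nn1: "0 \<le> Sr \<alpha> l a x" if "x \<ge> 0" for x
  proof (cases "x = 0")
    case True then show ?thesis by (simp add: Sr_0)
  next
    case False
    hence x: "x > 0" using that by simp
    have "0 \<le> pdf_f \<alpha> T rh \<phi> x" using assms(8) x by simp
    hence "0 \<le> C0 * Sr \<alpha> l a x" unfolding pdfeq[OF x] .
    thus ?thesis using C0 by (simp add: zero_le_mult_iff)
  qed
  have d1: "(\<lambda>r. ennreal (if r \<ge> 0 then pdf_f \<alpha> T rh \<phi> r else 0)) = dens \<alpha> l a C0 1"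
  proof (rule ext)
    fix r :: real
    show "ennreal (if r \<ge> 0 then pdf_f \<alpha> T rh \<phi> r else 0) = dens \<alpha> l a C0 1 r"
      unfolding dens_def pw_1 using pdfeq[of r] pdf0
      by (cases "r > 0"; cases "r = 0") (auto simp: Sr_0)
  qed
  have dist: "distributed M lborel (R i) (dens \<alpha> l a C0 1)" if "i \<in> {1..L}" for i
    using assms(10) that unfolding d1 by auto
  have SD: "distributed M lborel (\<lambda>\<omega>. \<Sum>i\<in>{1..L}. R i \<omega>) (dens \<alpha> l a C0 (card {1..L})) \<and>
         ACr \<alpha> (pw l (card {1..L})) (a * real (card {1..L})) \<and>
         (\<forall>x\<ge>0. 0 \<le> Sr \<alpha> (pw l (card {1..L})) (a * real (card {1..L})) x)"
    by (rule ps.sum_distributed[OF al a C0 ACl nn1 _ _ assms(9) dist]) (use L in auto)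
  hence D: "distributed M lborel S (dens \<alpha> l a C0 L)"
    and ACL: "ACr \<alpha> (pw l L) (a * real L)"
    and nnL: "\<And>x. x \<ge> 0 \<Longrightarrow> 0 \<le> Sr \<alpha> (pw l L) (a * real L) x"
    unfolding S_def by auto
  have l0: "l 0 \<noteq> 0"
  proof -
    have "Gamma (\<alpha> * T) > 0" "Gamma T > 0" using al T by (auto intro!: Gamma_real_pos)
    thus ?thesis unfolding l_def lam_def using phi0 rh by simp
  qed
  have deltaeq: "delta \<alpha> T rh \<phi> L i = pw l L i" for i
    unfolding pw_fps l_def by (rule delta_eq[OF l0[unfolded l_def] L])
  have C0L: "C0 ^ L = \<alpha> ^ L / rh powr (\<alpha> * T * real L)"
    unfolding C0_def power_divide using rh by (simp add: powr_power mult_ac)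
  have pdfsum: "pdf_sum \<alpha> T rh \<phi> L r = C0 ^ L * Sr \<alpha> (pw l L) (a * real L) r" for r
  proof -
    have "(\<lambda>i. delta \<alpha> T rh \<phi> L i * r powr (-1 + \<alpha> * real i + \<alpha> * real L * T) / Gamma (real i * \<alpha> + \<alpha> * real L * T))
        = (\<lambda>i. pw l L i * r powr (\<alpha> * real i + a * real L - 1) / Gamma (\<alpha> * real i + a * real L))"
    proof (rule ext)
      fix i
      have e1: "-1 + \<alpha> * real i + \<alpha> * real L * T = \<alpha> * real i + a * real L - 1" unfolding a_def by (simp add: algebra_simps)
      have e2: "real i * \<alpha> + \<alpha> * real L * T = \<alpha> * real i + a * real L" unfolding a_def by (simp add: algebra_simps)
      show "delta \<alpha> T rh \<phi> L i * r powr (-1 + \<alpha> * real i + \<alpha> * real L * T) / Gamma (real i * \<alpha> + \<alpha> * real L * T)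
        = pw l L i * r powr (\<alpha> * real i + a * real L - 1) / Gamma (\<alpha> * real i + a * real L)"
        unfolding e1 e2 deltaeq ..
    qed
    thus ?thesis unfolding pdf_sum_def Sr_def C0L by (simp only:)
  qed
  have dL: "(\<lambda>r. ennreal (if r \<ge> 0 then pdf_sum \<alpha> T rh \<phi> L r else 0)) = dens \<alpha> l a C0 L"
    by (rule ext) (simp only: dens_def pdfsum)
  show ?thesis
  proof
    show "distributed M lborel (\<lambda>x. \<Sum>l\<in>{1..L}. R l x) (\<lambda>r. ennreal (if r \<ge> 0 then pdf_sum \<alpha> T rh \<phi> L r else 0))"
      unfolding dL using D unfolding S_def .
    show "\<forall>r\<ge>0. measure M {x \<in> space M. (\<Sum>l\<in>{1..L}. R l x) \<le> r} = cdf_sum \<alpha> T rh \<phi> L r"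
    proof (intro allI impI)
      fix r :: real assume r0: "r \<ge> 0"
      define b where "b = a * real L"
      have b: "b > 0" unfolding b_def using a L by simp
      define G where "G x = C0 ^ L * Sr \<alpha> (pw l L) b x" for x
      have Gnn: "G x \<ge> 0" if "x \<ge> 0" for x unfolding G_def b_def using C0 nnL[OF that] by simp
      have meas: "S \<in> measurable M lborel" by (rule distributed_measurable[OF D])
      have dmeas: "dens \<alpha> l a C0 L \<in> borel_measurable lborel" by (rule distributed_borel_measurable[OF D])
      have set_eq: "{x \<in> space M. (\<Sum>l\<in>{1..L}. R l x) \<le> r} = S -` {..r} \<inter> space M"
        unfolding S_def by auto
      have "measure M {x \<in> space M. (\<Sum>l\<in>{1..L}. R l x) \<le> r} = measure (distr M lborel S) {..r}"
        unfolding set_eq by (rule measure_distr[symmetric, OF meas]) simp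
      also have "\<dots> = measure (density lborel (dens \<alpha> l a C0 L)) {..r}"
        unfolding distributed_distr_eq_density[OF D] ..
      also have "\<dots> = enn2real (\<integral>\<^sup>+x. dens \<alpha> l a C0 L x * indicator {..r} x \<partial>lborel)"
        unfolding measure_def by (subst emeasure_density[OF dmeas]) simp_all
      also have "(\<lambda>x. dens \<alpha> l a C0 L x * indicator {..r} x) = (\<lambda>x. ennreal (G x) * indicator {0..r} x)"
        by (rule ext) (auto simp: dens_def G_def b_def indicator_def)
      finally have meq: "measure M {x \<in> space M. (\<Sum>l\<in>{1..L}. R l x) \<le> r} =
          enn2real (\<integral>\<^sup>+x. ennreal (G x) * indicator {0..r} x \<partial>lborel)" .
      have cdfeq: "cdf_sum \<alpha> T rh \<phi> L r = C0 ^ L * Sr \<alpha> (pw l L) (b + 1) r"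
      proof -
        have "(\<lambda>i. delta \<alpha> T rh \<phi> L i * r powr (\<alpha> * real i + \<alpha> * real L * T) / Gamma (1 + real i * \<alpha> + \<alpha> * real L * T))
            = (\<lambda>i. pw l L i * r powr (\<alpha> * real i + (b + 1) - 1) / Gamma (\<alpha> * real i + (b + 1)))"
        proof (rule ext)
          fix i
          have e1: "\<alpha> * real i + \<alpha> * real L * T = \<alpha> * real i + (b + 1) - 1" unfolding b_def a_def by (simp add: algebra_simps)
          have e2: "1 + real i * \<alpha> + \<alpha> * real L * T = \<alpha> * real i + (b + 1)" unfolding b_def a_def by (simp add: algebra_simps)
          show "delta \<alpha> T rh \<phi> L i * r powr (\<alpha> * real i + \<alpha> * real L * T) / Gamma (1 + real i * \<alpha> + \<alpha> * real L * T)
            = pw l L i * r powr (\<alpha> * real i + (b + 1) - 1) / Gamma (\<alpha> * real i + (b + 1))"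
            unfolding e1 e2 deltaeq by (rule refl)
        qed
        thus ?thesis unfolding cdf_sum_def Sr_def C0L by (simp only:)
      qed
      show "measure M {x \<in> space M. (\<Sum>l\<in>{1..L}. R l x) \<le> r} = cdf_sum \<alpha> T rh \<phi> L r"
      proof (cases "r = 0")
        case True
        have "(\<lambda>x. ennreal (G x) * indicator {0..r} x) = (\<lambda>x. 0)"
          using True by (rule_tac ext) (auto simp: G_def Sr_0 indicator_def)
        hence "measure M {x \<in> space M. (\<Sum>l\<in>{1..L}. R l x) \<le> r} = 0" unfolding meq by simp
        moreover have "cdf_sum \<alpha> T rh \<phi> L r = 0" unfolding cdfeq by (simp add: True Sr_0)
        ultimately show ?thesis by simp
      next
        case False
        hence r: "r > 0" using r0 by simp
        have I1: "((\<lambda>s. (r - s) powr (1 - 1) * Sr \<alpha> (pw l L) b s) has_integral Gamma 1 * Sr \<alpha> (pw l L) (b + 1) r) {0..r}"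
          by (rule conv1[OF al b _ r ACL[folded b_def]]) simp
        have I2: "((\<lambda>s. Sr \<alpha> (pw l L) b s) has_integral Sr \<alpha> (pw l L) (b + 1) r) {0..r}"
        proof -
          have "((\<lambda>s. (r - s) powr (1 - 1) * Sr \<alpha> (pw l L) b s) has_integral Sr \<alpha> (pw l L) (b + 1) r) {0..r}"
            using I1 by simp
          moreover have "(r - s) powr (1 - 1) * Sr \<alpha> (pw l L) b s = Sr \<alpha> (pw l L) b s" if "s \<in> {0..r} - {r}" for s
            using that by simp
          ultimately show ?thesis
            by (subst has_integral_spike_finite_eq[of "{r}", symmetric]) auto
        qed
        have I3: "(G has_integral C0 ^ L * Sr \<alpha> (pw l L) (b + 1) r) {0..r}"
          unfolding G_def by (rule has_integral_mult_right[OF I2])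
        have "(\<integral>\<^sup>+x. ennreal (G x) * indicator {0..r} x \<partial>lborel) = ennreal (C0 ^ L * Sr \<alpha> (pw l L) (b + 1) r)"
          by (rule nn_integral_has_integral_lebesgue'[OF _ I3]) (use Gnn in auto)
        moreover have "C0 ^ L * Sr \<alpha> (pw l L) (b + 1) r \<ge> 0"
          by (rule has_integral_nonneg[OF I3]) (use Gnn in auto)
        ultimately show ?thesis unfolding meq cdfeq by simp
      qed
    qed
  qed
qed

end
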